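(* Assume $A$ is good. If $w\in\Sigma$ satisfies $I^*(w)<\infty$, then there exists $k\ge0$ with $\sigma^k(w)\in M$, i.e. $w$ is in a preimage of the support of the maximizing probability of $A^*$.
   Context: $\Sigma=\{0,1\}^{\mathbb N}$ with metric $d(u,v)=2^{-n}$, $n$ the first index of disagreement; $\sigma$ is the shift. $A^*:\Sigma\to\mathbb R$ is a Hölder potential (the dual potential of a Hölder $A$ via an involution kernel) with $m(A^* )=\max\{\int A^*d\nu:\nu \text{ $\sigma$-invariant}\}=0$; assume its maximizing probability $\mu^*_\infty$ is unique and supported on a single periodic orbit $M$ of $\sigma$. $V^*$ is a calibrated subaction for $A^*$: $V^*(w)=\max_{\sigma u=w}[V^*(u)+A^*(u)]$; $R^*(w)=V^*(\sigma w)-V^*(w)-A^*(w)\ge0$ and $I^*(w)=\sum_{n\ge0}R^*(\sigma^nw)\in[0,\infty]$. It is known (used here) that if $I^*(w)<\infty$ then $\frac1n\sum_{j<n}\delta_{\sigma^jw}\to\mu^*_\infty$ weakly. Let $P=\{w\notin M:\sigma(w)\in M\}$; $A$ is good if $R^*(w)>0$ for all $w\in P$. *)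

theory Defs
  imports "HOL-Analysis.Analysis" "HOL-Probability.Probability"
begin

text \<open>The full shift \<Sigma> = {0,1}^\<nat> is the type nat \<Rightarrow> bool with the product
  topology (bool is discrete), which is the topology of the metric d below.\<close>

type_synonym seq = "nat \<Rightarrow> bool"

definition shift :: "seq \<Rightarrow> seq" where
  "shift w = (\<lambda>n. w (Suc n))"

definition dist_sh :: "seq \<Rightarrow> seq \<Rightarrow> real" where
  "dist_sh u v = (if u = v then 0 else (1/2) ^ (LEAST n. u n \<noteq> v n))"

definition holder :: "(seq \<Rightarrow> real) \<Rightarrow> bool" where
  "holder f \<longleftrightarrow> (\<exists>C \<alpha>. \<alpha> > 0 \<and> (\<forall>u v. \<bar>f u - f v\<bar> \<le> C * dist_sh u v powr \<alpha>))"

definition invariant_prob :: "seq measure \<Rightarrow> bool" where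
  "invariant_prob \<nu> \<longleftrightarrow> prob_space \<nu> \<and> sets \<nu> = sets borel \<and>
     (\<forall>B \<in> sets borel. emeasure \<nu> (shift -` B) = emeasure \<nu> B)"

text \<open>m(f) = max of the integrals of f over invariant probabilities
  (the supremum, which is attained).\<close>
definition mval :: "(seq \<Rightarrow> real) \<Rightarrow> real" where
  "mval f = (SUP \<nu> \<in> {\<nu>. invariant_prob \<nu>}. integral\<^sup>L \<nu> f)"

definition maximizing :: "(seq \<Rightarrow> real) \<Rightarrow> seq measure \<Rightarrow> bool" where
  "maximizing f \<mu> \<longleftrightarrow> invariant_prob \<mu> \<and> integral\<^sup>L \<mu> f = mval f"

definition periodic_orbit :: "seq set \<Rightarrow> bool" where
  "periodic_orbit Mo \<longleftrightarrow> (\<exists>p n. n \<ge> 1 \<and> (shift ^^ n) p = p \<and>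
     Mo = {(shift ^^ j) p | j. j < n})"

definition calibrated_subaction :: "(seq \<Rightarrow> real) \<Rightarrow> (seq \<Rightarrow> real) \<Rightarrow> bool" where
  "calibrated_subaction f V \<longleftrightarrow>
     (\<forall>w. V w = Max {V u + f u | u. shift u = w})"

definition Rfun :: "(seq \<Rightarrow> real) \<Rightarrow> (seq \<Rightarrow> real) \<Rightarrow> seq \<Rightarrow> real" where
  "Rfun f V w = V (shift w) - V w - f w"

definition Ifun :: "(seq \<Rightarrow> real) \<Rightarrow> (seq \<Rightarrow> real) \<Rightarrow> seq \<Rightarrow> ennreal" where
  "Ifun f V w = (\<Sum>n. ennreal (Rfun f V ((shift ^^ n) w)))"

definition empirical_converges :: "seq \<Rightarrow> seq measure \<Rightarrow> bool" where
  "empirical_converges w \<mu> \<longleftrightarrow>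
     (\<forall>g :: seq \<Rightarrow> real. continuous_on UNIV g \<longrightarrow>
        (\<lambda>n. (\<Sum>j<n. g ((shift ^^ j) w)) / real n) \<longlonglongrightarrow> integral\<^sup>L \<mu> g)"

end

theory Submission
  imports Defs
begin

definition agr :: "nat \<Rightarrow> seq \<Rightarrow> seq \<Rightarrow> bool" where
  "agr N x y \<longleftrightarrow> (\<forall>i<N. x i = y i)"

lemma iter_shift: "(shift ^^ k) x = (\<lambda>i. x (k + i))"
  by (induction k arbitrary: x) (auto simp: shift_def)

lemma agr_mono: "agr N x y \<Longrightarrow> M \<le> N \<Longrightarrow> agr M x y"
  by (auto simp: agr_def)

lemma agr_shift: "agr (Suc N) x y \<Longrightarrow> agr N (shift x) (shift y)"
  by (auto simp: agr_def shift_def)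

lemma cyl_open:
  assumes "\<forall>x\<in>S. \<exists>N. \<forall>y. agr N y x \<longrightarrow> y \<in> S"
  shows "open (S :: seq set)"
  unfolding open_fun_def openin_product_topology_alt
proof
  fix x assume "x \<in> S"
  then obtain N where N: "\<forall>y. agr N y x \<longrightarrow> y \<in> S" using assms by blast
  define U where "U = (\<lambda>i. if i < N then {x i} else (UNIV :: bool set))"
  have "finite {i \<in> UNIV. U i \<noteq> topspace euclidean}"
    by (rule finite_subset[of _ "{..<N}"]) (auto simp: U_def)
  moreover have "\<forall>i\<in>UNIV. openin euclidean (U i)"
  proof
    fix i show "openin euclidean (U i)" by (metis Topological_Spaces.discrete_topology_class.open_discrete open_openin)
  qed
  moreover have "x \<in> Pi\<^sub>E UNIV U" by (auto simp: U_def)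
  moreover have "Pi\<^sub>E UNIV U \<subseteq> S"
  proof
    fix y assume "y \<in> Pi\<^sub>E UNIV U"
    then have "\<forall>i. y i \<in> U i" by (auto simp: PiE_def Pi_def)
    then have "agr N y x" unfolding agr_def U_def by (metis singletonD)
    then show "y \<in> S" using N by blast
  qed
  ultimately show "\<exists>U. finite {i \<in> UNIV. U i \<noteq> topspace euclidean} \<and>
            (\<forall>i\<in>UNIV. openin euclidean (U i)) \<and> x \<in> Pi\<^sub>E UNIV U \<and> Pi\<^sub>E UNIV U \<subseteq> S"
    by blast
qed

lemma cont_cyl:
  fixes V :: "seq \<Rightarrow> real"
  assumes "continuous_on UNIV V" "\<epsilon> > 0"
  shows "\<exists>N. \<forall>y. agr N y q \<longrightarrow> \<bar>V y - V q\<bar> < \<epsilon>"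
proof -
  have "open (V -` ball (V q) \<epsilon>)"
    using assms(1) continuous_on_open_vimage[of UNIV V] by auto
  moreover have "q \<in> V -` ball (V q) \<epsilon>" using assms(2) by simp
  ultimately obtain U where U: "finite {i \<in> UNIV. U i \<noteq> topspace euclidean}"
    "q \<in> Pi\<^sub>E UNIV U" "Pi\<^sub>E UNIV U \<subseteq> V -` ball (V q) \<epsilon>"
    unfolding open_fun_def openin_product_topology_alt by blast
  then obtain m where m: "\<forall>i\<in>{i. U i \<noteq> UNIV}. i < m"
    using finite_nat_set_iff_bounded by auto
  have "\<forall>y. agr m y q \<longrightarrow> \<bar>V y - V q\<bar> < \<epsilon>"
  proof (intro allI impI)
    fix y assume a: "agr m y q"
    have "y \<in> Pi\<^sub>E UNIV U"
    proof -
      have "y i \<in> U i" for i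
      proof (cases "i < m")
        case True then show ?thesis using a U(2) by (auto simp: agr_def)
      next
        case False then show ?thesis using m by auto
      qed
      then show ?thesis by auto
    qed
    then show "\<bar>V y - V q\<bar> < \<epsilon>" using U(3) by (auto simp: dist_real_def abs_minus_commute)
  qed
  then show ?thesis by blast
qed

lemma dist_sh_agr: "agr N y q \<Longrightarrow> dist_sh y q \<le> (1/2)^N"
proof (cases "y = q")
  case True then show ?thesis by (simp add: dist_sh_def)
next
  case False
  assume a: "agr N y q"
  then obtain i where "y i \<noteq> q i" using False by auto
  then have L: "y (LEAST n. y n \<noteq> q n) \<noteq> q (LEAST n. y n \<noteq> q n)" by (rule LeastI)
  have "N \<le> (LEAST n. y n \<noteq> q n)"
  proof (rule ccontr)
    assume "\<not> N \<le> (LEAST n. y n \<noteq> q n)"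
    then show False using a L unfolding agr_def by auto
  qed
  then have "(1/2::real)^(LEAST n. y n \<noteq> q n) \<le> (1/2)^N"
    by (intro power_decreasing) simp_all
  then show ?thesis using False by (simp add: dist_sh_def)
qed

lemma holder_cyl:
  assumes "holder A" "\<epsilon> > 0"
  shows "\<exists>N. \<forall>y. agr N y q \<longrightarrow> \<bar>A y - A q\<bar> < \<epsilon>"
proof -
  obtain C \<alpha> where C: "\<alpha> > 0" "\<And>u v. \<bar>A u - A v\<bar> \<le> C * dist_sh u v powr \<alpha>"
    using assms(1) unfolding holder_def by blast
  define r where "r = (1/2::real) powr \<alpha>"
  have r: "0 < r" "r < 1" using C(1) powr_less_mono2[of \<alpha> "1/2" 1] by (auto simp: r_def)
  have "(\<lambda>N. max C 0 * r ^ N) \<longlonglongrightarrow> max C 0 * 0"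
    by (intro tendsto_mult tendsto_const LIMSEQ_power_zero) (use r in auto)
  then have "eventually (\<lambda>N. max C 0 * r ^ N < \<epsilon>) sequentially"
    using assms(2) by (auto simp: order_tendsto_iff)
  then obtain N where N: "max C 0 * r ^ N < \<epsilon>" by (meson eventually_sequentially order_refl)
  have "\<bar>A y - A q\<bar> < \<epsilon>" if "agr N y q" for y
  proof -
    have d: "0 \<le> dist_sh y q" by (simp add: dist_sh_def)
    have "dist_sh y q powr \<alpha> \<le> ((1/2)^N) powr \<alpha>"
      using dist_sh_agr[OF that] d C(1) by (intro powr_mono2) auto
    also have "\<dots> = ((1/2::real) powr real N) powr \<alpha>"
      by (subst powr_realpow) auto
    also have "\<dots> = r powr real N" unfolding r_def by (simp only: powr_powr mult.commute)
    also have "\<dots> = r ^ N" using r by (subst powr_realpow) auto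
    finally have e: "dist_sh y q powr \<alpha> \<le> r ^ N" .
    have "\<bar>A y - A q\<bar> \<le> C * dist_sh y q powr \<alpha>" by (rule C(2))
    also have "\<dots> \<le> max C 0 * dist_sh y q powr \<alpha>" by (intro mult_right_mono) auto
    also have "\<dots> \<le> max C 0 * r ^ N" by (intro mult_left_mono e) auto
    finally show ?thesis using N by simp
  qed
  then show ?thesis by blast
qed

lemma R_cyl:
  fixes A V :: "seq \<Rightarrow> real"
  assumes "holder A" "continuous_on UNIV V" "\<epsilon> > 0"
  shows "\<exists>N. \<forall>y. agr N y q \<longrightarrow> \<bar>Rfun A V y - Rfun A V q\<bar> < \<epsilon>"
proof -
  have e3: "\<epsilon>/3 > 0" using assms(3) by simp
  obtain N1 where N1: "\<forall>y. agr N1 y q \<longrightarrow> \<bar>V y - V q\<bar> < \<epsilon>/3"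
    using cont_cyl[OF assms(2) e3] by blast
  obtain N2 where N2: "\<forall>y. agr N2 y (shift q) \<longrightarrow> \<bar>V y - V (shift q)\<bar> < \<epsilon>/3"
    using cont_cyl[OF assms(2) e3] by blast
  obtain N3 where N3: "\<forall>y. agr N3 y q \<longrightarrow> \<bar>A y - A q\<bar> < \<epsilon>/3"
    using holder_cyl[OF assms(1) e3] by blast
  define N where "N = max N1 (max (Suc N2) N3)"
  have "\<bar>Rfun A V y - Rfun A V q\<bar> < \<epsilon>" if "agr N y q" for y
  proof -
    have "agr N1 y q" "agr (Suc N2) y q" "agr N3 y q"
      using that by (auto intro: agr_mono simp: N_def)
    then have "\<bar>V y - V q\<bar> < \<epsilon>/3" "\<bar>V (shift y) - V (shift q)\<bar> < \<epsilon>/3"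
      "\<bar>A y - A q\<bar> < \<epsilon>/3"
      using N1 N2 N3 agr_shift by blast+
    then show ?thesis unfolding Rfun_def by linarith
  qed
  then show ?thesis by blast
qed

lemma uniform_pos:
  fixes A V :: "seq \<Rightarrow> real"
  assumes "holder A" "continuous_on UNIV V" "finite P" "\<forall>q\<in>P. Rfun A V q > 0"
  shows "\<exists>N \<delta>. \<delta> > 0 \<and> (\<forall>q\<in>P. \<forall>y. agr N y q \<longrightarrow> Rfun A V y \<ge> \<delta>)"
  using assms(3,4)
proof (induction P rule: finite_induct)
  case empty
  then show ?case by (intro exI[of _ 0] exI[of _ 1]) auto
next
  case (insert q P)
  then obtain N \<delta> where ND: "\<delta> > 0" "\<forall>q\<in>P. \<forall>y. agr N y q \<longrightarrow> Rfun A V y \<ge> \<delta>" by auto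
  have pq: "Rfun A V q / 2 > 0" using insert by auto
  obtain N' where N': "\<forall>y. agr N' y q \<longrightarrow> \<bar>Rfun A V y - Rfun A V q\<bar> < Rfun A V q / 2"
    using R_cyl[OF assms(1,2) pq] by blast
  show ?case
  proof (intro exI[of _ "max N N'"] exI[of _ "min \<delta> (Rfun A V q / 2)"] conjI)
    show "min \<delta> (Rfun A V q / 2) > 0" using ND pq by simp
    show "\<forall>qa\<in>insert q P. \<forall>y. agr (max N N') y qa \<longrightarrow> min \<delta> (Rfun A V q / 2) \<le> Rfun A V y"
    proof (intro ballI allI impI)
      fix qa y assume qa: "qa \<in> insert q P" and a: "agr (max N N') y qa"
      show "min \<delta> (Rfun A V q / 2) \<le> Rfun A V y"
      proof (cases "qa = q")
        case True
        then have "agr N' y q" using a by (auto intro: agr_mono)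
        then have "\<bar>Rfun A V y - Rfun A V q\<bar> < Rfun A V q / 2" using N' by blast
        then show ?thesis by linarith
      next
        case False
        then have "qa \<in> P" "agr N y qa" using qa a by (auto intro: agr_mono)
        then show ?thesis using ND by fastforce
      qed
    qed
  qed
qed

lemma orbit_facts:
  assumes per: "(shift^^n) p = p" and n: "n \<ge> 1" and Mo: "Mo = {(shift^^j) p | j. j<n}"
  shows "finite Mo" "\<And>m. m \<in> Mo \<Longrightarrow> shift m \<in> Mo"
    "\<And>m1 m2. m1 \<in> Mo \<Longrightarrow> m2 \<in> Mo \<Longrightarrow> agr n m1 m2 \<Longrightarrow> m1 = m2"
proof -
  have "Mo = (\<lambda>j. (shift^^j) p) ` {..<n}" using Mo by auto
  then show "finite Mo" by simp
next
  fix m assume "m \<in> Mo"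
  then obtain j where j: "j < n" "m = (shift^^j) p" using Mo by auto
  show "shift m \<in> Mo"
  proof (cases "Suc j < n")
    case True
    then show ?thesis using j Mo by (auto intro!: exI[of _ "Suc j"])
  next
    case False
    then have "Suc j = n" using j by simp
    then have "shift m = p" using j per by (metis comp_apply funpow.simps(2))
    then show ?thesis using Mo n by (auto intro!: exI[of _ 0])
  qed
next
  have perm: "(shift^^n) m = m" if "m \<in> Mo" for m
  proof -
    obtain j where j: "m = (shift^^j) p" using \<open>m \<in> Mo\<close> Mo by auto
    have "(shift^^n) m = (shift^^(n+j)) p" by (simp add: j funpow_add)
    also have "\<dots> = (shift^^j) ((shift^^n) p)" by (simp add: funpow_add add.commute)
    finally show ?thesis using per j by simp
  qed
  have modeq: "m i = m (i mod n)" if "m \<in> Mo" for m i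
  proof (induction i rule: less_induct)
    case (less i)
    show ?case
    proof (cases "i < n")
      case True then show ?thesis by simp
    next
      case False
      then obtain k where k: "i = n + k" by (metis le_iff_add not_le)
      have "m (n + k) = m k" using fun_cong[OF perm[OF that], of k] by (simp add: iter_shift)
      moreover have "k < i" using k n by simp
      moreover have "i mod n = k mod n" using k by simp
      ultimately show ?thesis using less k by simp
    qed
  qed
  fix m1 m2 assume a: "m1 \<in> Mo" "m2 \<in> Mo" "agr n m1 m2"
  show "m1 = m2"
  proof
    fix i
    have "i mod n < n" using n by simp
    then show "m1 i = m2 i" using modeq[OF a(1), of i] modeq[OF a(2), of i] a(3)
      by (simp add: agr_def)
  qed
qed

theorem mainTheorem5:
  fixes Astar Vstar :: "seq \<Rightarrow> real" and \<mu> :: "seq measure" and Mo :: "seq set"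
    and w :: seq
  assumes hol: "holder Astar"
    and m0: "mval Astar = 0"
    and maxim: "maximizing Astar \<mu>"
    and uniq: "\<And>\<nu>. maximizing Astar \<nu> \<Longrightarrow> \<nu> = \<mu>"
    and orbit: "periodic_orbit Mo"
    and supp: "emeasure \<mu> Mo = 1"
    and Vcont: "continuous_on UNIV Vstar"
    and calib: "calibrated_subaction Astar Vstar"
    and known: "\<And>v. Ifun Astar Vstar v < \<infinity> \<Longrightarrow> empirical_converges v \<mu>"
    and good: "\<And>x. x \<notin> Mo \<Longrightarrow> shift x \<in> Mo \<Longrightarrow> Rfun Astar Vstar x > 0"
    and fin: "Ifun Astar Vstar w < \<infinity>"
  shows "\<exists>k. (shift ^^ k) w \<in> Mo"
proof -
  obtain p n where pn: "n \<ge> 1" "(shift ^^ n) p = p" "Mo = {(shift ^^ j) p | j. j < n}"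
    using orbit unfolding periodic_orbit_def by blast
  note of = orbit_facts[OF pn(2,1,3)]
  define R where "R = Rfun Astar Vstar"
  define cons where "cons = (\<lambda>(b::bool) (x::seq) i. if i = 0 then b else x (i - 1))"
  have shift_cons: "shift (cons b x) = x" for b x by (auto simp: cons_def shift_def)
  define P where "P = {x. x \<notin> Mo \<and> shift x \<in> Mo}"
  have "P \<subseteq> (\<lambda>(b, x). cons b x) ` (UNIV \<times> Mo)"
  proof
    fix x assume "x \<in> P"
    moreover have "x = cons (x 0) (shift x)" by (auto simp: cons_def shift_def)
    ultimately show "x \<in> (\<lambda>(b, x). cons b x) ` (UNIV \<times> Mo)" unfolding P_def
      by (intro rev_image_eqI[of "(x 0, shift x)"]) auto
  qed
  moreover have "finite ((\<lambda>(b, x). cons b x) ` (UNIV \<times> Mo))" using of(1) by simp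
  ultimately have finP: "finite P" by (rule finite_subset)
  obtain NR \<delta> where ND: "\<delta> > 0" "\<forall>q\<in>P. \<forall>y. agr NR y q \<longrightarrow> R y \<ge> \<delta>"
    using uniform_pos[OF hol Vcont finP] good unfolding P_def R_def by auto
  define N where "N = max (n + 1) NR"
  define ws where "ws = (\<lambda>j. (shift ^^ j) w)"
  have ws_Suc: "ws (Suc j) = shift (ws j)" for j by (simp add: ws_def)
  define close where "close = (\<lambda>x. \<exists>m\<in>Mo. agr N x m)"
  have "summable (\<lambda>j. max 0 (R (ws j)))"
  proof (rule summable_suminf_not_top)
    show "\<And>j. 0 \<le> max 0 (R (ws j))" by simp
    have "(\<Sum>j. ennreal (max 0 (R (ws j)))) = Ifun Astar Vstar w"
      by (simp add: Ifun_def ennreal_max_0 R_def ws_def)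
    then show "(\<Sum>j. ennreal (max 0 (R (ws j)))) \<noteq> top" using fin by simp
  qed
  then have "(\<lambda>j. max 0 (R (ws j))) \<longlonglongrightarrow> 0" by (rule summable_LIMSEQ_zero)
  then have "eventually (\<lambda>j. max 0 (R (ws j)) < \<delta>) sequentially"
    using ND(1) by (auto simp: order_tendsto_iff)
  then obtain J where J: "\<And>j. j \<ge> J \<Longrightarrow> R (ws j) < \<delta>"
    unfolding eventually_sequentially by force
  have entry: "close (ws j)" if jJ: "j \<ge> J" and cl: "close (ws (Suc j))" for j
  proof (rule ccontr)
    assume nc: "\<not> close (ws j)"
    define y where "y = ws j"
    obtain p' where p': "p' \<in> Mo" "agr N (shift y) p'"
      using cl unfolding close_def y_def ws_Suc by blast
    define q where "q = cons (y 0) p'"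
    have sq: "shift q = p'" by (simp add: q_def shift_cons)
    have ag: "agr (Suc N) y q"
      unfolding agr_def
    proof (intro allI impI)
      fix i assume "i < Suc N"
      then show "y i = q i" using p'(2)
        by (cases i) (auto simp: agr_def q_def cons_def shift_def)
    qed
    have "q \<notin> Mo"
    proof
      assume "q \<in> Mo"
      moreover have "agr N y q" using agr_mono[OF ag] by simp
      ultimately have "close y" unfolding close_def by blast
      then show False using nc y_def by simp
    qed
    then have "q \<in> P" using sq p'(1) by (simp add: P_def)
    moreover have "agr NR y q" using ag by (rule agr_mono) (simp add: N_def)
    ultimately have "R y \<ge> \<delta>" using ND(2) by blast
    then show False using J[OF jJ] y_def by simp
  qed
  show ?thesis
  proof (cases "\<forall>j\<ge>J. close (ws j)")
    case True
    then obtain m0 where m0: "m0 \<in> Mo" "agr N (ws J) m0" unfolding close_def by auto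
    have inMo: "(shift ^^ k) m0 \<in> Mo" for k
      by (induction k) (auto simp: m0(1) of(2))
    have step: "agr N (ws (J + k)) ((shift ^^ k) m0)" for k
    proof (induction k)
      case 0 then show ?case using m0 by simp
    next
      case (Suc k)
      obtain m' where m': "m' \<in> Mo" "agr N (ws (J + Suc k)) m'"
        using True unfolding close_def by (meson le_add1)
      have "agr (N - 1) (shift (ws (J + k))) (shift ((shift ^^ k) m0))"
        using Suc.IH by (intro agr_shift) (simp add: N_def)
      then have a1: "agr (N - 1) (ws (J + Suc k)) ((shift ^^ Suc k) m0)"
        by (simp add: ws_Suc)
      have "agr n m' ((shift ^^ Suc k) m0)"
        using m'(2) a1 unfolding agr_def N_def by force
      then have "m' = (shift ^^ Suc k) m0" using of(3) m'(1) inMo by blast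
      then show ?case using m'(2) by simp
    qed
    have "ws J = m0"
    proof
      fix k
      have "ws (J + k) 0 = (shift ^^ k) m0 0" using step[of k] by (simp add: agr_def N_def)
      then show "ws J k = m0 k" by (simp add: ws_def iter_shift funpow_add)
    qed
    then show ?thesis using m0(1) ws_def by auto
  next
    case False
    then obtain j0 where j0: "j0 \<ge> J" "\<not> close (ws j0)" by auto
    have never: "\<not> close (ws k)" if "k \<ge> j0" for k
      using that
    proof (induction k rule: dec_induct)
      case base then show ?case using j0 by simp
    next
      case (step k) then show ?case using entry j0 by auto
    qed
    define S where "S = {x. close x}"
    define g where "g = (indicator S :: seq \<Rightarrow> real)"
    have closeN: "close y" if "close x" "agr N y x" for x y
      using that unfolding close_def agr_def by auto
    have openS: "open S"
      by (rule cyl_open) (use closeN in \<open>auto simp: S_def\<close>)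
    have openS': "open (- S)"
    proof (rule cyl_open, intro ballI exI allI impI)
      fix x y assume "x \<in> - S" "agr N y x"
      then show "y \<in> - S" using closeN[of y x] by (auto simp: S_def agr_def)
    qed
    have gcont: "continuous_on UNIV g"
    proof (subst continuous_on_open_vimage, rule open_UNIV, intro allI impI)
      fix B :: "real set" assume "open B"
      have "g -` B = {x\<in>S. 1 \<in> B} \<union> {x\<in>-S. 0 \<in> B}" by (auto simp: g_def indicator_def of_bool_def split: if_splits)
      moreover have "open ({x\<in>S. 1 \<in> B} \<union> {x\<in>-S. 0 \<in> B})"
        using openS openS' by (cases "1 \<in> B"; cases "0 \<in> B") (auto simp: Compl_eq[symmetric])
      ultimately show "open (g -` B \<inter> UNIV)" by simp
    qed
    have lim: "(\<lambda>m. (\<Sum>j<m. g (ws j)) / real m) \<longlonglongrightarrow> integral\<^sup>L \<mu> g"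
      using known[OF fin] gcont unfolding empirical_converges_def ws_def by blast
    have ip: "invariant_prob \<mu>" using maxim by (simp add: maximizing_def)
    then have ps: "prob_space \<mu>" and sb: "sets \<mu> = sets borel" by (auto simp: invariant_prob_def)
    have sp: "space \<mu> = UNIV" using sets_eq_imp_space_eq[OF sb] by simp
    have Sm: "S \<in> sets \<mu>" using openS sb by simp
    have Mom: "Mo \<in> sets \<mu>" using supp emeasure_notin_sets by fastforce
    have "Mo \<subseteq> S" by (auto simp: S_def close_def agr_def)
    then have "emeasure \<mu> Mo \<le> emeasure \<mu> S" using Sm by (rule emeasure_mono)
    moreover have "emeasure \<mu> S \<le> 1" using ps by (rule prob_space.emeasure_le_1)
    ultimately have "emeasure \<mu> S = 1" using supp by simp
    then have "measure \<mu> S = 1" by (simp add: measure_def)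
    then have int1: "integral\<^sup>L \<mu> g = 1" by (simp add: g_def sp)
    have bnd: "(\<Sum>j<m. g (ws j)) \<le> real (min m j0)" for m
    proof (induction m)
      case 0 then show ?case by simp
    next
      case (Suc m)
      show ?case
      proof (cases "m < j0")
        case True
        have "g (ws m) \<le> 1" by (simp add: g_def indicator_def)
        then show ?thesis using Suc True by simp
      next
        case False
        then have "g (ws m) = 0" using never[of m] by (simp add: g_def S_def)
        then show ?thesis using Suc False by simp
      qed
    qed
    have "(\<Sum>j<m. g (ws j)) / real m \<le> real j0 / real m" for m
      using bnd[of m] by (intro divide_right_mono) auto
    then have "integral\<^sup>L \<mu> g \<le> 0"
      using lim lim_const_over_n[of "real j0"]
      by (intro LIMSEQ_le[OF lim]) auto
    then show ?thesis using int1 by simp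
  qed
qed

end
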